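(* Let $G$ be a left-orderable group acting on its space $\mathcal{LO}(G)$ of left-orderings by conjugation. Then every left-ordering whose orbit under this action is finite is Conradian.
   Context: A left-ordering is a total order invariant under left multiplication; it is Conradian if for all $f\succ id$, $g\succ id$ there is $n\in\mathbb{N}$ with $fg^n\succ g$. The action of $g\in G$ sends $\preceq$ to $\preceq_g$, defined by $h\succ_g f$ iff $ghg^{-1}\succ gfg^{-1}$. *)

theory Defs
  imports "HOL-Algebra.Group"
begin

definition left_ordering :: "('a, 'b) monoid_scheme \<Rightarrow> ('a \<Rightarrow> 'a \<Rightarrow> bool) \<Rightarrow> bool" where
  "left_ordering G R \<longleftrightarrow>
     (\<forall>x y. R x y \<longrightarrow> x \<in> carrier G \<and> y \<in> carrier G) \<and>
     (\<forall>x\<in>carrier G. R x x) \<and>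
     (\<forall>x\<in>carrier G. \<forall>y\<in>carrier G. R x y \<and> R y x \<longrightarrow> x = y) \<and>
     (\<forall>x\<in>carrier G. \<forall>y\<in>carrier G. \<forall>z\<in>carrier G. R x y \<and> R y z \<longrightarrow> R x z) \<and>
     (\<forall>x\<in>carrier G. \<forall>y\<in>carrier G. R x y \<or> R y x) \<and>
     (\<forall>h\<in>carrier G. \<forall>x\<in>carrier G. \<forall>y\<in>carrier G. R x y \<longrightarrow> R (h \<otimes>\<^bsub>G\<^esub> x) (h \<otimes>\<^bsub>G\<^esub> y))"

definition LO :: "('a, 'b) monoid_scheme \<Rightarrow> ('a \<Rightarrow> 'a \<Rightarrow> bool) set" where
  "LO G = {R. left_ordering G R}"

definition left_orderable :: "('a, 'b) monoid_scheme \<Rightarrow> bool" where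
  "left_orderable G \<longleftrightarrow> LO G \<noteq> {}"

definition strict_gr :: "('a \<Rightarrow> 'a \<Rightarrow> bool) \<Rightarrow> 'a \<Rightarrow> 'a \<Rightarrow> bool" where
  "strict_gr R f g \<longleftrightarrow> R g f \<and> f \<noteq> g"

definition conj_act :: "('a, 'b) monoid_scheme \<Rightarrow> 'a \<Rightarrow> ('a \<Rightarrow> 'a \<Rightarrow> bool) \<Rightarrow> ('a \<Rightarrow> 'a \<Rightarrow> bool)" where
  "conj_act G g R = (\<lambda>f h. f \<in> carrier G \<and> h \<in> carrier G \<and>
      R (g \<otimes>\<^bsub>G\<^esub> f \<otimes>\<^bsub>G\<^esub> inv\<^bsub>G\<^esub> g) (g \<otimes>\<^bsub>G\<^esub> h \<otimes>\<^bsub>G\<^esub> inv\<^bsub>G\<^esub> g))"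

definition conj_orbit :: "('a, 'b) monoid_scheme \<Rightarrow> ('a \<Rightarrow> 'a \<Rightarrow> bool) \<Rightarrow> ('a \<Rightarrow> 'a \<Rightarrow> bool) set" where
  "conj_orbit G R = {conj_act G g R | g. g \<in> carrier G}"

definition conradian :: "('a, 'b) monoid_scheme \<Rightarrow> ('a \<Rightarrow> 'a \<Rightarrow> bool) \<Rightarrow> bool" where
  "conradian G R \<longleftrightarrow>
     (\<forall>f\<in>carrier G. \<forall>g\<in>carrier G.
        strict_gr R f \<one>\<^bsub>G\<^esub> \<and> strict_gr R g \<one>\<^bsub>G\<^esub> \<longrightarrow>
        (\<exists>n::nat. n \<ge> 1 \<and> strict_gr R (f \<otimes>\<^bsub>G\<^esub> (g [^]\<^bsub>G\<^esub> n)) g))"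

end

theory Submission
  imports Defs
begin

lemma lo_props:
  assumes "left_ordering G R"
  shows "\<And>x y z. x\<in>carrier G \<Longrightarrow> y\<in>carrier G \<Longrightarrow> z\<in>carrier G \<Longrightarrow> R x y \<Longrightarrow> R y z \<Longrightarrow> R x z"
    and "\<And>x y. x\<in>carrier G \<Longrightarrow> y\<in>carrier G \<Longrightarrow> R x y \<Longrightarrow> R y x \<Longrightarrow> x = y"
    and "\<And>h x y. h\<in>carrier G \<Longrightarrow> x\<in>carrier G \<Longrightarrow> y\<in>carrier G \<Longrightarrow> R x y \<Longrightarrow> R (h \<otimes>\<^bsub>G\<^esub> x) (h \<otimes>\<^bsub>G\<^esub> y)"
    and "\<And>x. x\<in>carrier G \<Longrightarrow> R x x"
  using assms unfolding left_ordering_def by metis+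

context group
begin

lemma exists_period:
  assumes "finite (conj_orbit G R)" "g \<in> carrier G"
  shows "\<exists>i j::nat. i < j \<and> conj_act G (g [^]\<^bsub>G\<^esub> i) R = conj_act G (g [^]\<^bsub>G\<^esub> j) R"
proof -
  let ?h = "\<lambda>k::nat. conj_act G (g [^] k) R"
  have "range ?h \<subseteq> conj_orbit G R"
    using assms(2) by (auto simp: conj_orbit_def)
  then have "finite (range ?h)" using assms(1) finite_subset by blast
  then have "\<not> inj ?h" using finite_imageD by blast
  then obtain i j where "i \<noteq> j" "?h i = ?h j" unfolding inj_def by blast
  then show ?thesis
    by (metis linorder_neqE_nat)
qed

lemma pow_ge:
  assumes "left_ordering G R" "g \<in> carrier G" "R \<one>\<^bsub>G\<^esub> g" "(k::nat) \<ge> 1"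
  shows "R g (g [^]\<^bsub>G\<^esub> k)"
  using assms(4)
proof (induction k rule: dec_induct)
  case base
  show ?case using assms(2) lo_props(4)[OF assms(1)] by simp
next
  case (step k)
  have "R (g [^] k \<otimes> \<one>) (g [^] k \<otimes> g)"
    using assms(2,3) lo_props(3)[OF assms(1), of "g [^] k" \<one> g] by simp
  then have "R (g [^] k) (g [^] Suc k)"
    using assms(2) by (simp add: nat_pow_Suc)
  then show ?case using step.IH assms(2) lo_props(1)[OF assms(1), of g "g [^] k" "g [^] Suc k"] by simp
qed

lemma main_aux:
  assumes "R \<in> LO G"
    and "finite (conj_orbit G R)"
  shows "conradian G R"
  unfolding conradian_def
proof (intro ballI impI)
  have LOR: "left_ordering G R" using assms(1) by (simp add: LO_def)
  fix f g assume f: "f \<in> carrier G" and g: "g \<in> carrier G"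
    and pos: "strict_gr R f \<one> \<and> strict_gr R g \<one>"
  then have f1: "R \<one> f" "f \<noteq> \<one>" and g1: "R \<one> g" "g \<noteq> \<one>"
    by (auto simp: strict_gr_def)
  obtain i j :: nat where ij: "i < j" "conj_act G (g [^] i) R = conj_act G (g [^] j) R"
    using exists_period[OF assms(2) g] by blast
  define d where "d = j - i"
  define a where "a = g [^] i"
  define c where "c = g [^] d"
  have d1: "d \<ge> 1" using ij by (simp add: d_def)
  have a: "a \<in> carrier G" and c: "c \<in> carrier G" using g by (auto simp: a_def c_def)
  have jca: "g [^] j = c \<otimes> a"
    using g ij by (simp add: a_def c_def d_def nat_pow_mult)
  define y where "y = inv a \<otimes> (inv c \<otimes> f \<otimes> c) \<otimes> a"
  have y: "y \<in> carrier G" using a c f by (simp add: y_def)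
  have canc: "\<And>u x. u \<in> carrier G \<Longrightarrow> x \<in> carrier G \<Longrightarrow> u \<otimes> (inv u \<otimes> x) = x"
    by (metis inv_closed m_assoc r_inv l_one)
  have canc2: "\<And>u x. u \<in> carrier G \<Longrightarrow> x \<in> carrier G \<Longrightarrow> inv u \<otimes> (u \<otimes> x) = x"
    by (metis inv_closed m_assoc l_inv l_one)
  have e1: "a \<otimes> \<one> \<otimes> inv a = \<one>" using a by simp
  have e2: "c \<otimes> a \<otimes> \<one> \<otimes> inv (c \<otimes> a) = \<one>" using a c by (simp add: inv_mult_group m_assoc r_inv flip: m_assoc[of a "inv a"])
  have e3: "a \<otimes> y \<otimes> inv a = inv c \<otimes> f \<otimes> c"
    using a c f by (simp add: y_def m_assoc canc canc2)
  have e4: "c \<otimes> a \<otimes> y \<otimes> inv (c \<otimes> a) = f"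
    using a c f by (simp add: y_def m_assoc inv_mult_group canc canc2)
  have "conj_act G a R \<one> y = conj_act G (c \<otimes> a) R \<one> y"
    using ij(2) jca by (simp add: a_def)
  then have key: "R \<one> (inv c \<otimes> f \<otimes> c) = R \<one> f"
    using y e1 e2 e3 e4 by (simp add: conj_act_def)
  have "R \<one> (inv c \<otimes> f \<otimes> c)" using key f1 by simp
  then have "R (c \<otimes> \<one>) (c \<otimes> (inv c \<otimes> f \<otimes> c))"
    using c f lo_props(3)[OF LOR, of c \<one>] by simp
  then have cfc: "R c (f \<otimes> c)" using c f by (simp add: m_assoc canc)
  have gc: "R g c" unfolding c_def using pow_ge[OF LOR g g1(1) d1] .
  have fc: "f \<otimes> c \<in> carrier G" using f c by simp
  have R1: "R g (f \<otimes> c)" using gc cfc g c fc lo_props(1)[OF LOR] by blast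
  have "f \<otimes> c \<noteq> g"
  proof
    assume eq: "f \<otimes> c = g"
    then have "c = g" using gc cfc g c lo_props(2)[OF LOR] by simp
    then have "f \<otimes> c = \<one> \<otimes> c" using eq c by simp
    then have "f = \<one>" using f c by (metis right_cancel one_closed)
    then show False using f1 by simp
  qed
  then show "\<exists>n::nat. n \<ge> 1 \<and> strict_gr R (f \<otimes> (g [^] n)) g"
    using R1 d1 by (auto simp: strict_gr_def c_def)
qed
end

theorem mainTheorem20:
  fixes G :: "('a, 'b) monoid_scheme" and R :: "'a \<Rightarrow> 'a \<Rightarrow> bool"
  assumes "group G"
    and "left_orderable G"
    and "R \<in> LO G"
    and "finite (conj_orbit G R)"
  shows "conradian G R"
  using group.main_aux[OF assms(1) assms(3,4)] .

end
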